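(* Let $\{W_t\}_{t\ge0}$ be a standard Brownian motion, let $\{\rho_s\}_{s\ge0}$ be an initial term-structure density ($\rho_s=-\partial_sP_{0s}>0$, $\int_0^\infty\rho_s\,\mathrm ds=1$), and let $\{\phi_s\}_{s\ge0}$ be a deterministic function (the functional model parameter). Consider the Flesaker–Hughston model based on the GBM family $M_{ts}=\exp(\phi_sW_t-\tfrac12\phi_s^2t)$, with bond prices $$P_{tT}=\frac{\int_T^\infty\rho_s\exp(\phi_sW_t-\frac12\phi_s^2t)\,\mathrm ds}{\int_t^\infty\rho_s\exp(\phi_sW_t-\frac12\phi_s^2t)\,\mathrm ds}.$$ Define $$\Phi_{tT}=\frac{\int_T^\infty\phi_s\rho_s\exp(\phi_sW_t-\frac12\phi_s^2t)\,\mathrm ds}{\int_T^\infty\rho_s\exp(\phi_sW_t-\frac12\phi_s^2t)\,\mathrm ds},\qquad \Phi_{tt}=\lim_{s\to t}\Phi_{st},$$ the bond volatility $\Omega_{tT}=\Phi_{tT}-\Phi_{tt}$, the market price of risk $\lambda_t=-\Phi_{tt}$, and the risk premium $\lambda_t\Omega_{tT}=\Phi_{tt}(\Phi_{tt}-\Phi_{tT})$. If either $\{\phi_t\}$ is positive and decreasing, or $\{\phi_t\}$ is negative and increasing, then the risk premium $\lambda_t\Omega_{tT}$ is positive (for $0<t<T$). *)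

theory Defs
  imports "HOL-Analysis.Analysis"
begin

definition FH_M :: "(real \<Rightarrow> real) \<Rightarrow> real \<Rightarrow> real \<Rightarrow> real \<Rightarrow> real" where
  "FH_M \<phi> t w s = exp (\<phi> s * w - (\<phi> s)\<^sup>2 * t / 2)"

definition FH_P :: "(real \<Rightarrow> real) \<Rightarrow> (real \<Rightarrow> real) \<Rightarrow> (real \<Rightarrow> real) \<Rightarrow> real \<Rightarrow> real \<Rightarrow> real" where
  "FH_P \<phi> \<rho> W t T =
     (LINT s:{T..}|lborel. \<rho> s * FH_M \<phi> t (W t) s) /
     (LINT s:{t..}|lborel. \<rho> s * FH_M \<phi> t (W t) s)"

definition FH_Phi :: "(real \<Rightarrow> real) \<Rightarrow> (real \<Rightarrow> real) \<Rightarrow> (real \<Rightarrow> real) \<Rightarrow> real \<Rightarrow> real \<Rightarrow> real" where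
  "FH_Phi \<phi> \<rho> W t T =
     (LINT s:{T..}|lborel. \<phi> s * \<rho> s * FH_M \<phi> t (W t) s) /
     (LINT s:{T..}|lborel. \<rho> s * FH_M \<phi> t (W t) s)"

definition FH_Phi_tt :: "(real \<Rightarrow> real) \<Rightarrow> (real \<Rightarrow> real) \<Rightarrow> (real \<Rightarrow> real) \<Rightarrow> real \<Rightarrow> real" where
  "FH_Phi_tt \<phi> \<rho> W t = Lim (at t) (\<lambda>s. FH_Phi \<phi> \<rho> W s t)"

definition FH_Omega :: "(real \<Rightarrow> real) \<Rightarrow> (real \<Rightarrow> real) \<Rightarrow> (real \<Rightarrow> real) \<Rightarrow> real \<Rightarrow> real \<Rightarrow> real" where
  "FH_Omega \<phi> \<rho> W t T = FH_Phi \<phi> \<rho> W t T - FH_Phi_tt \<phi> \<rho> W t"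

definition FH_lambda :: "(real \<Rightarrow> real) \<Rightarrow> (real \<Rightarrow> real) \<Rightarrow> (real \<Rightarrow> real) \<Rightarrow> real \<Rightarrow> real" where
  "FH_lambda \<phi> \<rho> W t = - FH_Phi_tt \<phi> \<rho> W t"

end

theory Submission
  imports Defs
begin

lemma e1: fixes a w B C :: real assumes "\<bar>a\<bar> \<le> B" "\<bar>w\<bar> \<le> C"
  shows "a * w \<le> B * C"
proof -
  have "a * w \<le> \<bar>a\<bar> * \<bar>w\<bar>" by (metis abs_ge_self abs_mult)
  also have "\<dots> \<le> B * C" using assms by (intro mult_mono) auto
  finally show ?thesis .
qed
lemma e2: fixes a u B C :: real assumes "\<bar>a\<bar> \<le> B" "\<bar>u\<bar> \<le> C"
  shows "- (a\<^sup>2 * u / 2) \<le> B^2 * C / 2"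
proof -
  have "a\<^sup>2 \<le> B\<^sup>2" using assms(1) by (metis abs_le_square_iff abs_of_nonneg abs_ge_zero order.trans)
  have "- (a\<^sup>2 * u) \<le> a\<^sup>2 * \<bar>u\<bar>" by (metis abs_ge_minus_self abs_mult abs_of_nonneg zero_le_power2 mult_minus_right)
  also have "\<dots> \<le> B^2 * C" using assms \<open>a\<^sup>2 \<le> B\<^sup>2\<close> by (intro mult_mono) auto
  finally show ?thesis by simp
qed

lemma cont_int:
  fixes c \<rho> \<phi> W :: "real \<Rightarrow> real"
  assumes cm[measurable]: "c \<in> borel_measurable borel" and cK: "\<forall>x. \<bar>c x\<bar> \<le> K"
   and \<rho>m[measurable]: "\<rho> \<in> borel_measurable borel" and \<rho>i: "set_integrable lborel {t..} \<rho>"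
   and \<phi>m[measurable]: "\<phi> \<in> borel_measurable borel" and \<phi>B: "\<forall>x. \<bar>\<phi> x\<bar> \<le> B"
   and Wc: "continuous_on UNIV W"
  shows "((\<lambda>u. LINT x:{t..}|lborel. c x * \<rho> x * FH_M \<phi> u (W u) x) \<longlongrightarrow>
          (LINT x:{t..}|lborel. c x * \<rho> x * FH_M \<phi> t (W t) x)) (at t)"
proof -
  define S where "S u x = indicator {t..} x *\<^sub>R (c x * \<rho> x * FH_M \<phi> u (W u) x)" for u x
  have B0: "0 \<le> B" using \<phi>B by (meson abs_ge_zero order.trans)
  have SM[measurable]: "S u \<in> borel_measurable lborel" for u
    unfolding S_def FH_M_def by measurable
  have Sc: "isCont (\<lambda>u. S u x) t" for x
  proof -
    have "isCont W t" using Wc by (simp add: continuous_on_eq_continuous_at)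
    then show ?thesis unfolding S_def FH_M_def by (intro continuous_intros) simp_all
  qed
  show ?thesis
    unfolding set_lebesgue_integral_def S_def[symmetric]
  proof (rule tendsto_at_iff_sequentially[THEN iffD2], intro allI impI)
    fix X :: "nat \<Rightarrow> real" assume "\<forall>i. X i \<in> UNIV - {t}" and X: "X \<longlonglongrightarrow> t"
    have "isCont W t" using Wc by (simp add: continuous_on_eq_continuous_at)
    then have WX: "(\<lambda>n. W (X n)) \<longlonglongrightarrow> W t" using X by (rule isCont_tendsto_compose)
    have "eventually (\<lambda>n. dist (W (X n)) (W t) < 1) sequentially" using WX by (simp add: tendsto_iff)
    moreover have "eventually (\<lambda>n. dist (X n) t < 1) sequentially" using X by (simp add: tendsto_iff)
    ultimately have "eventually (\<lambda>n. dist (W (X n)) (W t) < 1 \<and> dist (X n) t < 1) sequentially"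
      by (rule eventually_conj)
    then obtain N where N: "\<And>n. n \<ge> N \<Longrightarrow> dist (W (X n)) (W t) < 1 \<and> dist (X n) t < 1"
      by (auto simp: eventually_sequentially)
    define Mc where "Mc = exp (B * (\<bar>W t\<bar> + 1) + B^2 * (\<bar>t\<bar> + 1) / 2)"
    have "integrable lborel (\<lambda>x. indicator {t..} x *\<^sub>R \<rho> x)" using \<rho>i by (simp add: set_integrable_def)
    then have wi: "integrable lborel (\<lambda>x. K * Mc * \<bar>indicator {t..} x *\<^sub>R \<rho> x\<bar>)" by auto
    have bnd: "norm (S (X (n + N)) x) \<le> K * Mc * \<bar>indicator {t..} x *\<^sub>R \<rho> x\<bar>" for n x
    proof -
      have d: "\<bar>W (X (n+N))\<bar> \<le> \<bar>W t\<bar> + 1" "\<bar>X (n+N)\<bar> \<le> \<bar>t\<bar> + 1" using N[of "n+N"] by (auto simp: dist_real_def)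
      have "\<phi> x * W (X (n+N)) \<le> B * (\<bar>W t\<bar> + 1)" using \<phi>B d(1) by (intro e1) auto
      moreover have "- ((\<phi> x)\<^sup>2 * X (n+N) / 2) \<le> B^2 * (\<bar>t\<bar> + 1) / 2" using \<phi>B d(2) by (intro e2) auto
      ultimately have F: "FH_M \<phi> (X (n+N)) (W (X (n+N))) x \<le> Mc"
        unfolding FH_M_def Mc_def by simp
      have K0: "0 \<le> K" using cK by (meson abs_ge_zero order.trans)
      have F0: "0 \<le> FH_M \<phi> (X (n+N)) (W (X (n+N))) x" by (simp add: FH_M_def)
      have "\<bar>c x * \<rho> x * FH_M \<phi> (X (n+N)) (W (X (n+N))) x\<bar> = \<bar>c x\<bar> * \<bar>\<rho> x\<bar> * FH_M \<phi> (X (n+N)) (W (X (n+N))) x"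
        using F0 by (simp add: abs_mult)
      also have "\<dots> \<le> K * \<bar>\<rho> x\<bar> * Mc" using cK F F0 K0 by (intro mult_mono) auto
      finally have A: "\<bar>c x * \<rho> x * FH_M \<phi> (X (n+N)) (W (X (n+N))) x\<bar> \<le> K * Mc * \<bar>\<rho> x\<bar>" by (simp add: mult_ac)
      show ?thesis
      proof (cases "x \<in> {t..}")
        case True then show ?thesis using A by (simp add: S_def)
      next
        case False then show ?thesis using K0 by (simp add: S_def Mc_def)
      qed
    qed
    have "(\<lambda>n. integral\<^sup>L lborel (S (X (n + N)))) \<longlonglongrightarrow> integral\<^sup>L lborel (S t)"
    proof (rule integral_dominated_convergence[OF _ _ wi])
      show "AE x in lborel. (\<lambda>i. S (X (i + N)) x) \<longlonglongrightarrow> S t x"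
      proof (rule AE_I2)
        fix x
        have "(\<lambda>i. X (i + N)) \<longlonglongrightarrow> t" using X by (rule LIMSEQ_ignore_initial_segment)
        then show "(\<lambda>i. S (X (i + N)) x) \<longlonglongrightarrow> S t x"
          by (rule isCont_tendsto_compose[OF Sc])
      qed
      show "AE x in lborel. norm (S (X (i + N)) x) \<le> K * Mc * \<bar>indicator {t..} x *\<^sub>R \<rho> x\<bar>" for i
        using bnd by simp
    qed (rule SM)+
    then have "(\<lambda>n. ((\<lambda>u. integral\<^sup>L lborel (S u)) \<circ> X) (n + N)) \<longlonglongrightarrow> integral\<^sup>L lborel (S t)"
      by (simp only: comp_def)
    then show "((\<lambda>u. integral\<^sup>L lborel (S u)) \<circ> X) \<longlonglongrightarrow> integral\<^sup>L lborel (S t)"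
      by (rule LIMSEQ_offset)
  qed
qed


lemma int_pos:
  fixes f :: "real \<Rightarrow> real"
  assumes A: "A \<in> sets lborel" "{a..<b} \<subseteq> A" "a < b"
    and fi: "set_integrable lborel A f" and pos: "\<forall>x\<in>A. f x > 0"
  shows "(LINT x:A|lborel. f x) > 0"
proof -
  let ?g = "\<lambda>x. indicator A x *\<^sub>R f x"
  have gi: "integrable lborel ?g" using fi by (simp add: set_integrable_def)
  have nn: "AE x in lborel. 0 \<le> ?g x"
    by (rule AE_I2) (use pos in \<open>auto simp: indicator_def less_imp_le\<close>)
  have ge: "0 \<le> (LINT x:A|lborel. f x)"
    unfolding set_lebesgue_integral_def using nn by (rule integral_nonneg_AE)
  moreover have "(LINT x:A|lborel. f x) \<noteq> 0"
  proof
    assume "(LINT x:A|lborel. f x) = 0"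
    then have "AE x in lborel. ?g x = 0"
      using integral_nonneg_eq_0_iff_AE[OF gi nn] by (simp add: set_lebesgue_integral_def)
    then have "AE x in lborel. x \<notin> {a..<b}"
    proof eventually_elim
      case (elim x)
      show ?case
      proof
        assume "x \<in> {a..<b}"
        then have "x \<in> A" using A by auto
        then show False using elim pos by (auto simp: indicator_def)
      qed
    qed
    moreover have "{x \<in> space lborel. \<not> (x \<notin> {a..<b})} = {a..<b}" by auto
    ultimately have "emeasure lborel {a..<b} = 0"
      using AE_iff_measurable[of "{a..<b}" lborel "\<lambda>x. x \<notin> {a..<b}"] by simp
    then show False using A by simp
  qed
  ultimately show ?thesis by simp
qed

lemma core:
  fixes w \<psi> :: "real \<Rightarrow> real" and t T :: real
  assumes wi: "set_integrable lborel {t..} w" and pi: "set_integrable lborel {t..} (\<lambda>s. \<psi> s * w s)"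
   and wp: "\<forall>s\<ge>t. w s > 0" and pp: "\<forall>s\<ge>t. \<psi> s > 0"
   and dec: "\<forall>s s'. t \<le> s \<longrightarrow> s < s' \<longrightarrow> \<psi> s' < \<psi> s" and tT: "t < T"
  shows "(LINT s:{t..}|lborel. \<psi> s * w s) / (LINT s:{t..}|lborel. w s) > 0"
    and "(LINT s:{t..}|lborel. \<psi> s * w s) / (LINT s:{t..}|lborel. w s)
          - (LINT s:{T..}|lborel. \<psi> s * w s) / (LINT s:{T..}|lborel. w s) > 0"
proof -
  define Dt where "Dt = (LINT s:{t..}|lborel. w s)"
  define DT where "DT = (LINT s:{T..}|lborel. w s)"
  define DI where "DI = (LINT s:{t..<T}|lborel. w s)"
  define Nt where "Nt = (LINT s:{t..}|lborel. \<psi> s * w s)"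
  define NT where "NT = (LINT s:{T..}|lborel. \<psi> s * w s)"
  define NI where "NI = (LINT s:{t..<T}|lborel. \<psi> s * w s)"
  have sub: "{T..} \<subseteq> {t..}" "{t..<T} \<subseteq> {t..}" using tT by auto
  have wiT: "set_integrable lborel {T..} w" by (rule set_integrable_subset[OF wi _ sub(1)]) simp
  have piT: "set_integrable lborel {T..} (\<lambda>s. \<psi> s * w s)" by (rule set_integrable_subset[OF pi _ sub(1)]) simp
  have wiI: "set_integrable lborel {t..<T} w" by (rule set_integrable_subset[OF wi _ sub(2)]) simp
  have piI: "set_integrable lborel {t..<T} (\<lambda>s. \<psi> s * w s)" by (rule set_integrable_subset[OF pi _ sub(2)]) simp
  have Dt: "Dt > 0" unfolding Dt_def by (rule int_pos[OF _ _ tT wi]) (use wp in auto)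
  have DT: "DT > 0" unfolding DT_def
    by (rule int_pos[of _ T "T+1"]) (use wp tT wiT in auto)
  have Nt: "Nt > 0" unfolding Nt_def by (rule int_pos[OF _ _ tT pi]) (use wp pp in auto)
  show "(LINT s:{t..}|lborel. \<psi> s * w s) / (LINT s:{t..}|lborel. w s) > 0"
    using Dt Nt by (simp add: Dt_def Nt_def)
  have split: "{t..} = {t..<T} \<union> {T..}" using tT by auto
  have Ds: "Dt = DI + DT" unfolding Dt_def DI_def DT_def split
    by (rule set_integral_Un[OF _ wiI wiT]) auto
  have Ns: "Nt = NI + NT" unfolding Nt_def NI_def NT_def split
    by (rule set_integral_Un[OF _ piI piT]) auto
  have "NT \<le> (LINT s:{T..}|lborel. \<psi> T * w s)" unfolding NT_def
  proof (rule set_integral_mono[OF piT])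
    show "set_integrable lborel {T..} (\<lambda>s. \<psi> T * w s)" using wiT by simp
    fix s assume s: "s \<in> {T..}"
    then have "\<psi> s \<le> \<psi> T" using dec[rule_format, of T s] tT by (cases "s = T") auto
    moreover have "w s > 0" using wp s tT by auto
    ultimately show "\<psi> s * w s \<le> \<psi> T * w s" by (simp add: mult_right_mono)
  qed
  then have NT_le: "NT \<le> \<psi> T * DT" by (simp add: DT_def)
  have ii: "set_integrable lborel {t..<T} (\<lambda>s. DT * (\<psi> s * w s) - NT * w s)"
    using wiI piI by (intro set_integral_diff) auto
  have key: "(LINT s:{t..<T}|lborel. DT * (\<psi> s * w s) - NT * w s) > 0"
  proof (rule int_pos[OF _ _ tT ii])
    show "\<forall>x\<in>{t..<T}. DT * (\<psi> x * w x) - NT * w x > 0"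
    proof
      fix s assume s: "s \<in> {t..<T}"
      have "\<psi> T < \<psi> s" using dec s by auto
      then have "\<psi> T * DT < \<psi> s * DT" using DT by simp
      then have "NT < \<psi> s * DT" using NT_le by simp
      moreover have "w s > 0" using wp s by auto
      ultimately have "NT * w s < \<psi> s * DT * w s" by simp
      then show "DT * (\<psi> s * w s) - NT * w s > 0" by (simp add: mult_ac)
    qed
  qed auto
  have "(LINT s:{t..<T}|lborel. DT * (\<psi> s * w s) - NT * w s) = DT * NI - NT * DI"
    using wiI piI by (simp add: set_integral_diff NI_def DI_def)
  with key have "DT * NI - NT * DI > 0" by simp
  then have "Nt * DT - NT * Dt > 0" using Ds Ns by (simp add: algebra_simps)
  then have "Nt / Dt - NT / DT > 0" using Dt DT by (simp add: field_simps)
  then show "(LINT s:{t..}|lborel. \<psi> s * w s) / (LINT s:{t..}|lborel. w s)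
          - (LINT s:{T..}|lborel. \<psi> s * w s) / (LINT s:{T..}|lborel. w s) > 0"
    by (simp add: Nt_def Dt_def NT_def DT_def)
qed


lemma integr:
  fixes c \<rho> \<phi> :: "real \<Rightarrow> real" and A :: "real set"
  assumes cm[measurable]: "c \<in> borel_measurable borel" and cK: "\<forall>x. \<bar>c x\<bar> \<le> K"
   and \<rho>m[measurable]: "\<rho> \<in> borel_measurable borel" and \<rho>i: "set_integrable lborel A \<rho>"
   and Am[measurable]: "A \<in> sets borel"
   and \<phi>m[measurable]: "\<phi> \<in> borel_measurable borel" and \<phi>B: "\<forall>x. \<bar>\<phi> x\<bar> \<le> B"
  shows "set_integrable lborel A (\<lambda>s. c s * \<rho> s * FH_M \<phi> u x s)"
proof -
  define Mc where "Mc = exp (B * \<bar>x\<bar> + B^2 * \<bar>u\<bar> / 2)"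
  have K0: "0 \<le> K" using cK by (meson abs_ge_zero order.trans)
  have Mc0: "0 \<le> Mc" by (simp add: Mc_def)
  have "set_integrable lborel A (\<lambda>s. (K * Mc) * \<rho> s)" using \<rho>i by auto
  then show ?thesis
  proof (rule set_integrable_bound)
    show "set_borel_measurable lborel A (\<lambda>s. c s * \<rho> s * FH_M \<phi> u x s)"
      unfolding set_borel_measurable_def FH_M_def by measurable
    show "AE s in lborel. s \<in> A \<longrightarrow> norm (c s * \<rho> s * FH_M \<phi> u x s) \<le> norm (K * Mc * \<rho> s)"
    proof (rule AE_I2, intro impI)
      fix s
      have "\<phi> s * x \<le> B * \<bar>x\<bar>" using \<phi>B by (intro e1) auto
      moreover have "- ((\<phi> s)\<^sup>2 * u / 2) \<le> B^2 * \<bar>u\<bar> / 2" using \<phi>B by (intro e2) auto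
      ultimately have F: "FH_M \<phi> u x s \<le> Mc" unfolding FH_M_def Mc_def by simp
      have F0: "0 \<le> FH_M \<phi> u x s" by (simp add: FH_M_def)
      have "\<bar>c s * \<rho> s * FH_M \<phi> u x s\<bar> = \<bar>c s\<bar> * \<bar>\<rho> s\<bar> * FH_M \<phi> u x s"
        using F0 by (simp add: abs_mult)
      also have "\<dots> \<le> K * \<bar>\<rho> s\<bar> * Mc" using cK F F0 K0 by (intro mult_mono) auto
      also have "\<dots> = \<bar>K * Mc * \<rho> s\<bar>" using K0 Mc0 by (simp add: abs_mult)
      finally show "norm (c s * \<rho> s * FH_M \<phi> u x s) \<le> norm (K * Mc * \<rho> s)" by simp
    qed
  qed
qed

theorem proposition2:
  fixes W \<rho> \<phi> :: "real \<Rightarrow> real" and t T :: real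
  assumes W_cont: "continuous_on UNIV W" and W0: "W 0 = 0"
    and rho_pos: "\<forall>s\<ge>0. \<rho> s > 0"
    and rho_int: "set_integrable lborel {0..} \<rho>"
    and rho_one: "(LINT s:{0..}|lborel. \<rho> s) = 1"
    and phi: "((\<forall>s\<ge>0. \<phi> s > 0) \<and> (\<forall>s s'. 0 \<le> s \<longrightarrow> s < s' \<longrightarrow> \<phi> s' < \<phi> s))
            \<or> ((\<forall>s\<ge>0. \<phi> s < 0) \<and> (\<forall>s s'. 0 \<le> s \<longrightarrow> s < s' \<longrightarrow> \<phi> s < \<phi> s'))"
    and t: "0 < t" and tT: "t < T"
  shows "FH_lambda \<phi> \<rho> W t * FH_Omega \<phi> \<rho> W t T > 0"
proof -
  define \<phi>' where "\<phi>' s = \<phi> (max s 0)" for s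
  define \<rho>' where "\<rho>' s = indicator {0..} s * \<rho> s" for s
  define B where "B = \<bar>\<phi> 0\<bar>"
  have \<phi>B: "\<forall>x. \<bar>\<phi>' x\<bar> \<le> B"
  proof
    fix x :: real
    have m: "max x 0 \<ge> (0::real)" by simp
    have "(\<phi> (max x 0) \<le> \<phi> 0 \<and> 0 < \<phi> (max x 0)) \<or> (\<phi> 0 \<le> \<phi> (max x 0) \<and> \<phi> (max x 0) < 0)"
    proof (cases "max x 0 = 0")
      case True then show ?thesis using phi by auto
    next
      case False
      then have "0 < max x 0" using m by linarith
      then show ?thesis using phi m by (meson less_imp_le order_refl)
    qed
    then show "\<bar>\<phi>' x\<bar> \<le> B" by (auto simp: \<phi>'_def B_def)
  qed
  have mono_max: "x \<le> y \<Longrightarrow> max x 0 = max y 0 \<or> max x 0 < max y 0" for x y :: real by auto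
  have \<phi>m[measurable]: "\<phi>' \<in> borel_measurable borel"
    using phi
  proof
    assume h: "(\<forall>s\<ge>0. \<phi> s > 0) \<and> (\<forall>s s'. 0 \<le> s \<longrightarrow> s < s' \<longrightarrow> \<phi> s' < \<phi> s)"
    have "mono (\<lambda>x. - \<phi>' x)"
    proof (rule monoI)
      fix x y :: real assume "x \<le> y"
      then consider "max x 0 = max y 0" | "max x 0 < max y 0" using mono_max by blast
      then show "- \<phi>' x \<le> - \<phi>' y"
        by cases (use h in \<open>auto simp: \<phi>'_def less_imp_le\<close>)
    qed
    then have "(\<lambda>x. - \<phi>' x) \<in> borel_measurable borel" by (rule borel_measurable_mono)
    then have "(\<lambda>x. - (- \<phi>' x)) \<in> borel_measurable borel" by measurable
    then show ?thesis by simp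
  next
    assume h: "(\<forall>s\<ge>0. \<phi> s < 0) \<and> (\<forall>s s'. 0 \<le> s \<longrightarrow> s < s' \<longrightarrow> \<phi> s < \<phi> s')"
    have "mono \<phi>'"
    proof (rule monoI)
      fix x y :: real assume "x \<le> y"
      then consider "max x 0 = max y 0" | "max x 0 < max y 0" using mono_max by blast
      then show "\<phi>' x \<le> \<phi>' y"
        by cases (use h in \<open>auto simp: \<phi>'_def less_imp_le\<close>)
    qed
    then show ?thesis by (rule borel_measurable_mono)
  qed
  have "integrable lborel (\<lambda>x. indicator {0..} x *\<^sub>R \<rho> x)" using rho_int by (simp add: set_integrable_def)
  then have "(\<lambda>x. indicator {0..} x *\<^sub>R \<rho> x) \<in> borel_measurable lborel" by (rule borel_measurable_integrable)
  then have \<rho>m[measurable]: "\<rho>' \<in> borel_measurable borel" by (simp add: \<rho>'_def[abs_def])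
  have \<rho>i0: "set_integrable lborel {0..} \<rho>'"
    using rho_int by (subst set_integrable_cong[where f'=\<rho>]) (auto simp: \<rho>'_def)
  have \<rho>ia: "set_integrable lborel {a..} \<rho>'" if "0 \<le> a" for a
    by (rule set_integrable_subset[OF \<rho>i0]) (use that in auto)
  have eqM: "FH_M \<phi> u x s = FH_M \<phi>' u x s" if "0 \<le> s" for u x s
    using that by (simp add: FH_M_def \<phi>'_def max_def)
  have eqPhi: "FH_Phi \<phi> \<rho> W u a = FH_Phi \<phi>' \<rho>' W u a" if "0 \<le> a" for a u
  proof -
    have "(LINT s:{a..}|lborel. \<phi> s * \<rho> s * FH_M \<phi> u (W u) s) = (LINT s:{a..}|lborel. \<phi>' s * \<rho>' s * FH_M \<phi>' u (W u) s)"
      by (rule set_lebesgue_integral_cong) (use that eqM in \<open>auto simp: \<phi>'_def \<rho>'_def\<close>)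
    moreover have "(LINT s:{a..}|lborel. \<rho> s * FH_M \<phi> u (W u) s) = (LINT s:{a..}|lborel. \<rho>' s * FH_M \<phi>' u (W u) s)"
      by (rule set_lebesgue_integral_cong) (use that eqM in \<open>auto simp: \<rho>'_def\<close>)
    ultimately show ?thesis unfolding FH_Phi_def by simp
  qed
  have oneK: "\<forall>x. \<bar>(\<lambda>_. 1::real) x\<bar> \<le> 1" by simp
  have intw: "set_integrable lborel {a..} (\<lambda>s. \<rho>' s * FH_M \<phi>' u x s)" if "0 \<le> a" for a u x
    using integr[of "\<lambda>_. 1", OF _ oneK \<rho>m \<rho>ia[OF that] _ \<phi>m \<phi>B] by simp
  have intp: "set_integrable lborel {a..} (\<lambda>s. \<phi>' s * \<rho>' s * FH_M \<phi>' u x s)" if "0 \<le> a" for a u x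
    using integr[OF \<phi>m \<phi>B \<rho>m \<rho>ia[OF that] _ \<phi>m \<phi>B] by simp
  have wpos: "\<rho>' s * FH_M \<phi>' u x s > 0" if "0 \<le> s" for s u x
    using that rho_pos by (simp add: \<rho>'_def FH_M_def)
  have Dpos: "(LINT s:{a..}|lborel. \<rho>' s * FH_M \<phi>' u x s) > 0" if "0 \<le> a" for a u x
    by (rule int_pos[of _ a "a+1"]) (use that intw wpos in auto)
  have tt: "FH_Phi_tt \<phi> \<rho> W t = FH_Phi \<phi>' \<rho>' W t t"
  proof -
    have "FH_Phi_tt \<phi> \<rho> W t = Lim (at t) (\<lambda>s. FH_Phi \<phi>' \<rho>' W s t)"
      unfolding FH_Phi_tt_def using eqPhi t by simp
    also have "\<dots> = FH_Phi \<phi>' \<rho>' W t t"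
    proof (rule tendsto_Lim)
      show "\<not> trivial_limit (at t)" by (rule trivial_limit_at)
      have num: "((\<lambda>u. LINT s:{t..}|lborel. \<phi>' s * \<rho>' s * FH_M \<phi>' u (W u) s) \<longlongrightarrow>
           (LINT s:{t..}|lborel. \<phi>' s * \<rho>' s * FH_M \<phi>' t (W t) s)) (at t)"
        by (rule cont_int[OF \<phi>m \<phi>B \<rho>m \<rho>ia \<phi>m \<phi>B W_cont]) (use t in simp)
      have den: "((\<lambda>u. LINT s:{t..}|lborel. (\<lambda>_. 1) s * \<rho>' s * FH_M \<phi>' u (W u) s) \<longlongrightarrow>
           (LINT s:{t..}|lborel. (\<lambda>_. 1) s * \<rho>' s * FH_M \<phi>' t (W t) s)) (at t)"
        by (rule cont_int[OF _ oneK \<rho>m \<rho>ia \<phi>m \<phi>B W_cont]) (use t in simp_all)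
      then have den': "((\<lambda>u. LINT s:{t..}|lborel. \<rho>' s * FH_M \<phi>' u (W u) s) \<longlongrightarrow>
           (LINT s:{t..}|lborel. \<rho>' s * FH_M \<phi>' t (W t) s)) (at t)" by simp
      have nz: "(LINT s:{t..}|lborel. \<rho>' s * FH_M \<phi>' t (W t) s) \<noteq> 0"
        using Dpos[of t] t by (metis less_irrefl less_imp_le)
      show "((\<lambda>s. FH_Phi \<phi>' \<rho>' W s t) \<longlongrightarrow> FH_Phi \<phi>' \<rho>' W t t) (at t)"
        unfolding FH_Phi_def by (rule tendsto_divide[OF num den' nz])
    qed
    finally show ?thesis .
  qed
  have tT': "FH_Phi \<phi> \<rho> W t T = FH_Phi \<phi>' \<rho>' W t T" using eqPhi t tT by simp
  define w where "w s = \<rho>' s * FH_M \<phi>' t (W t) s" for s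
  have wi: "set_integrable lborel {t..} w" unfolding w_def[abs_def] using intw t by simp
  have pi: "set_integrable lborel {t..} (\<lambda>s. \<phi>' s * w s)"
    unfolding w_def[abs_def] using intp[of t] t by (simp add: mult.assoc)
  have wp: "\<forall>s\<ge>t. w s > 0" unfolding w_def using wpos t by simp
  have Phi_eq: "FH_Phi \<phi>' \<rho>' W t a = (LINT s:{a..}|lborel. \<phi>' s * w s) / (LINT s:{a..}|lborel. w s)" for a
    unfolding FH_Phi_def w_def by (simp add: mult.assoc)
  define Ptt where "Ptt = FH_Phi \<phi>' \<rho>' W t t"
  define PtT where "PtT = FH_Phi \<phi>' \<rho>' W t T"
  have goal: "FH_lambda \<phi> \<rho> W t * FH_Omega \<phi> \<rho> W t T = Ptt * (Ptt - PtT)"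
    unfolding FH_lambda_def FH_Omega_def tt tT' Ptt_def PtT_def by (simp add: algebra_simps)
  show ?thesis
    using phi
  proof
    assume h: "(\<forall>s\<ge>0. \<phi> s > 0) \<and> (\<forall>s s'. 0 \<le> s \<longrightarrow> s < s' \<longrightarrow> \<phi> s' < \<phi> s)"
    have pp: "\<forall>s\<ge>t. \<phi>' s > 0" using h t by (simp add: \<phi>'_def)
    have dec: "\<forall>s s'. t \<le> s \<longrightarrow> s < s' \<longrightarrow> \<phi>' s' < \<phi>' s" using h t by (simp add: \<phi>'_def)
    note c = core[OF wi pi wp pp dec tT]
    have "Ptt > 0" "Ptt - PtT > 0" using c unfolding Ptt_def PtT_def Phi_eq by simp_all
    then show ?thesis unfolding goal by simp
  next
    assume h: "(\<forall>s\<ge>0. \<phi> s < 0) \<and> (\<forall>s s'. 0 \<le> s \<longrightarrow> s < s' \<longrightarrow> \<phi> s < \<phi> s')"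
    have pp: "\<forall>s\<ge>t. - \<phi>' s > 0" using h t by (simp add: \<phi>'_def)
    have dec: "\<forall>s s'. t \<le> s \<longrightarrow> s < s' \<longrightarrow> - \<phi>' s' < - \<phi>' s" using h t by (simp add: \<phi>'_def)
    have pi': "set_integrable lborel {t..} (\<lambda>s. - \<phi>' s * w s)"
      using set_integrable_mult_right[of "-1" lborel "{t..}" "\<lambda>s. \<phi>' s * w s"] pi by simp
    note c = core[OF wi pi' wp pp dec tT]
    have neg: "(LINT s:{a..}|lborel. - \<phi>' s * w s) = - (LINT s:{a..}|lborel. \<phi>' s * w s)" if "t \<le> a" for a
    proof -
      have "set_integrable lborel {a..} (\<lambda>s. \<phi>' s * w s)"
        by (rule set_integrable_subset[OF pi]) (use that in auto)
      then show ?thesis using set_integral_uminus[of lborel "{a..}" "\<lambda>s. \<phi>' s * w s"] by simp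
    qed
    have "0 < (LINT s:{t..}|lborel. - \<phi>' s * w s) / (LINT s:{t..}|lborel. w s)" by (rule c(1))
    then have "0 < - ((LINT s:{t..}|lborel. \<phi>' s * w s) / (LINT s:{t..}|lborel. w s))"
      by (simp only: neg[OF order_refl] minus_divide_left)
    then have n1: "0 < - Ptt" unfolding Ptt_def Phi_eq .
    have "0 < (LINT s:{t..}|lborel. - \<phi>' s * w s) / (LINT s:{t..}|lborel. w s)
          - (LINT s:{T..}|lborel. - \<phi>' s * w s) / (LINT s:{T..}|lborel. w s)" by (rule c(2))
    then have "0 < - ((LINT s:{t..}|lborel. \<phi>' s * w s) / (LINT s:{t..}|lborel. w s))
          - - ((LINT s:{T..}|lborel. \<phi>' s * w s) / (LINT s:{T..}|lborel. w s))"
      using tT by (simp only: neg[OF order_refl] neg[of T] less_imp_le minus_divide_left)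
    then have n2: "0 < - Ptt - - PtT" unfolding Ptt_def PtT_def Phi_eq .
    have "Ptt < 0" "Ptt - PtT < 0" using n1 n2 by linarith+
    then show ?thesis unfolding goal by (simp add: mult_neg_neg)
  qed
qed

end
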